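(* Consider the nonautonomous TASEP with $n$ sites and rate functions $\lambda_0,\dots,\lambda_n$, with associated NRDS $\phi$ on state space $X=\{0,1\}^n$. Suppose that on an interval $I=[t_0,t)$ the $n+1$ Poisson processes have joint $(r,R,m)$-bounded rates with $m=n(n+1)/2$ and $R>r>0$. Then there exists $\delta=\delta(r,R,n)>0$ such that $\mathbb{P}(\Gamma(t,t_0))\ge\delta$, where $\Gamma(t,t_0):=\{\omega\mid\phi(t,t_0,x_1,\omega)=\phi(t,t_0,x_2,\omega)\text{ for all }x_1,x_2\in X\}$.
   Context: Nonautonomous TASEP: $n$ sites; locally integrable rate functions $\lambda_k:\mathbb{R}\to[0,\infty)$, $k=0,\dots,n$, each with $\int_0^t\lambda_k\to\pm\infty$ as $t\to\pm\infty$; to each $k$ an independent non-homogeneous Poisson process on $\mathbb{R}$ with rate $\lambda_k$ (the image of its points under $M_k(t)=\int_0^t\lambda_k$ is a homogeneous rate-1 Poisson process on $\mathbb{R}$). Almost surely all points of all processes are distinct without accumulation; ordering them gives jump times $t_i(\omega)$ increasing in $i\in\mathbb{Z}$ and sites $k_i(\omega)\in\{0,\dots,n\}$. State $x=(s_1,\dots,s_n)\in X=\{0,1\}^n$ ($s_j=1$ iff site $j$ occupied). Single-jump map: $f(x,0)=(1,s_2,\dots,s_n)$; $f(x,n)=(s_1,\dots,s_{n-1},0)$; for $0<k<n$ with $s_k=1,s_{k+1}=0$, $f(x,k)$ sets $s_k=0,s_{k+1}=1$; otherwise $f(x,k)=x$. The NRDS: $\phi(t,t_0,x,\omega)$ is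 obtained from $x$ by applying successively $f(\cdot,k_i(\omega))$ for all $i$ with $t_i(\omega)\in[t_0,t)$ in increasing order of $i$ (and equals $x$ if there is no such $i$). Joint $(r,R,m)$-bounded rates on $[\tau_1,\tau_2)$: there exist $\tau_1=q_0<\dots<q_m=\tau_2$ with $r\le\int_{q_i}^{q_{i+1}}\lambda_k\le R$ for all $i=0,\dots,m-1$, $k=0,\dots,n$. *)

theory Defs
  imports "HOL-Analysis.Analysis" "HOL-Probability.Probability"
begin

text \<open>States of the TASEP with n sites: boolean lists of length n;
  entry j-1 (0-based) is True iff site j is occupied.\<close>

definition tasep_states :: "nat \<Rightarrow> bool list set" where
  "tasep_states n = {x. length x = n}"

definition tasep_jump :: "nat \<Rightarrow> bool list \<Rightarrow> nat \<Rightarrow> bool list" where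
  "tasep_jump n x k =
     (if k = 0 then x[0 := True]
      else if k = n then x[n - 1 := False]
      else if k < n \<and> x ! (k - 1) \<and> \<not> x ! k then x[k - 1 := False, k := True]
      else x)"

text \<open>A sample point: \<omega> k is the set of points of the k-th Poisson process (k = 0..n).\<close>
type_synonym config = "nat \<Rightarrow> real set"

definition jump_times :: "nat \<Rightarrow> config \<Rightarrow> real \<Rightarrow> real \<Rightarrow> real set" where
  "jump_times n \<omega> t0 t = (\<Union>k\<in>{0..n}. \<omega> k \<inter> {t0..<t})"

definition jump_site :: "nat \<Rightarrow> config \<Rightarrow> real \<Rightarrow> nat" where
  "jump_site n \<omega> s = (THE k. k \<le> n \<and> s \<in> \<omega> k)"

text \<open>The NRDS \<phi>(t,t0,x,\<omega>): apply the jumps with times in [t0,t) in increasing order.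
  (Well defined whenever the points are distinct and locally finite, which holds a.s.)\<close>
definition tasep_phi :: "nat \<Rightarrow> real \<Rightarrow> real \<Rightarrow> bool list \<Rightarrow> config \<Rightarrow> bool list" where
  "tasep_phi n t t0 x \<omega> =
     fold (\<lambda>s y. tasep_jump n y (jump_site n \<omega> s))
          (sorted_list_of_set (jump_times n \<omega> t0 t)) x"

definition synchronised :: "nat \<Rightarrow> real \<Rightarrow> real \<Rightarrow> config set" where
  "synchronised n t t0 = {\<omega>. \<forall>x1\<in>tasep_states n. \<forall>x2\<in>tasep_states n.
       tasep_phi n t t0 x1 \<omega> = tasep_phi n t t0 x2 \<omega>}"

definition admissible_rates :: "nat \<Rightarrow> (nat \<Rightarrow> real \<Rightarrow> real) \<Rightarrow> bool" where
  "admissible_rates n lam \<longleftrightarrow> (\<forall>k\<le>n.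
      (\<forall>s. 0 \<le> lam k s) \<and>
      (\<forall>a b. lam k integrable_on {a..b}) \<and>
      filterlim (\<lambda>t. integral {0..t} (lam k)) at_top at_top \<and>
      filterlim (\<lambda>t. integral {t..0} (lam k)) at_top at_bot)"

definition poisson_processes :: "nat \<Rightarrow> (nat \<Rightarrow> real \<Rightarrow> real) \<Rightarrow> config measure \<Rightarrow> bool" where
  "poisson_processes n lam M \<longleftrightarrow>
     prob_space M \<and>
     (\<forall>k\<le>n. \<forall>a b. AE \<omega> in M. finite (\<omega> k \<inter> {a..<b})) \<and>
     (\<forall>k\<le>n. \<forall>a b. a \<le> b \<longrightarrow>
        (\<lambda>\<omega>. card (\<omega> k \<inter> {a..<b})) \<in> measurable M (count_space UNIV) \<and>
        (\<forall>j::nat. measure M {\<omega> \<in> space M. card (\<omega> k \<inter> {a..<b}) = j} =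
             (integral {a..b} (lam k)) ^ j / fact j * exp (- integral {a..b} (lam k)))) \<and>
     (\<forall>J::(nat \<times> real \<times> real) set. finite J \<longrightarrow>
        (\<forall>(k,a,b)\<in>J. k \<le> n \<and> a \<le> b) \<longrightarrow>
        (\<forall>(k,a,b)\<in>J. \<forall>(k',a',b')\<in>J. (k,a,b) \<noteq> (k',a',b') \<longrightarrow> k = k' \<longrightarrow>
              {a..<b} \<inter> {a'..<b'} = {}) \<longrightarrow>
        prob_space.indep_vars M (\<lambda>_. count_space UNIV)
          (\<lambda>(k,a,b) \<omega>. card (\<omega> k \<inter> {a..<b})) J)"

definition joint_bounded_rates ::
  "nat \<Rightarrow> (nat \<Rightarrow> real \<Rightarrow> real) \<Rightarrow> real \<Rightarrow> real \<Rightarrow> nat \<Rightarrow> real \<Rightarrow> real \<Rightarrow> bool" where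
  "joint_bounded_rates n lam r R m tau1 tau2 \<longleftrightarrow>
     (\<exists>q::nat \<Rightarrow> real. q 0 = tau1 \<and> q m = tau2 \<and> (\<forall>i<m. q i < q (Suc i)) \<and>
        (\<forall>i<m. \<forall>k\<le>n. r \<le> integral {q i..q (Suc i)} (lam k) \<and>
                         integral {q i..q (Suc i)} (lam k) \<le> R))"

end

theory Submission
  imports Defs
begin

fun sweep :: "nat \<Rightarrow> nat list" where
  "sweep 0 = []" | "sweep (Suc j) = [0..<Suc j] @ sweep j"

lemma length_sweep: "length (sweep j) = j * (j + 1) div 2"
  by (induction j) auto

lemma set_sweep: "set (sweep j) \<subseteq> {..<j}"
  by (induction j) auto

lemma length_jump: "length x = n \<Longrightarrow> length (tasep_jump n x k) = n"
  unfolding tasep_jump_def by auto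

lemma length_fold_jump: "length x = n \<Longrightarrow> length (fold (\<lambda>k y. tasep_jump n y k) ks x) = n"
  by (induction ks arbitrary: x) (auto simp: length_jump)

lemma prefix_fill:
  assumes "1 \<le> j" "j \<le> n" "length x = n"
  shows "(\<forall>p. j \<le> p \<and> p < n \<longrightarrow> fold (\<lambda>k y. tasep_jump n y k) [0..<j] x ! p = x ! p)
         \<and> fold (\<lambda>k y. tasep_jump n y k) [0..<j] x ! (j - 1)"
  using assms
proof (induction j)
  case 0 then show ?case by simp
next
  case (Suc j)
  show ?case
  proof (cases "j = 0")
    case True
    then show ?thesis using Suc.prems by (auto simp: tasep_jump_def)
  next
    case False
    define y where "y = fold (\<lambda>k y. tasep_jump n y k) [0..<j] x"
    have IH: "(\<forall>p. j \<le> p \<and> p < n \<longrightarrow> y ! p = x ! p) \<and> y ! (j - 1)"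
      using Suc False unfolding y_def by auto
    have ly: "length y = n" using Suc.prems length_fold_jump y_def by blast
    have eq: "fold (\<lambda>k y. tasep_jump n y k) [0..<Suc j] x = tasep_jump n y j"
      by (simp add: y_def)
    have jn: "j < n" "j \<noteq> 0" using Suc.prems False by auto
    show ?thesis unfolding eq
      using IH ly jn by (auto simp: tasep_jump_def nth_list_update)
  qed
qed

lemma sweep_fill:
  assumes "j \<le> n" "length x = n" "\<forall>p. j \<le> p \<and> p < n \<longrightarrow> x ! p"
  shows "fold (\<lambda>k y. tasep_jump n y k) (sweep j) x = replicate n True"
  using assms
proof (induction j arbitrary: x)
  case 0
  then show ?case by (simp add: list_eq_iff_nth_eq)
next
  case (Suc j)
  define y where "y = fold (\<lambda>k y. tasep_jump n y k) [0..<Suc j] x"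
  have P: "(\<forall>p. Suc j \<le> p \<and> p < n \<longrightarrow> y ! p = x ! p) \<and> y ! j"
    using prefix_fill[of "Suc j" n x] Suc.prems unfolding y_def by auto
  have "length y = n" using Suc.prems length_fold_jump y_def by blast
  moreover have "\<forall>p. j \<le> p \<and> p < n \<longrightarrow> y ! p"
    using P Suc.prems by (metis le_antisym not_less_eq_eq)
  ultimately have "fold (\<lambda>k y. tasep_jump n y k) (sweep j) y = replicate n True"
    using Suc by auto
  then show ?case by (simp add: y_def)
qed


lemma q_mono:
  assumes "\<forall>i<m. q i < q (Suc i)" "i < j" "j \<le> m"
  shows "q i < (q j :: real)"
  using assms(2,3)
proof (induction j)
  case 0 then show ?case by simp
next
  case (Suc j)
  have s: "q j < q (Suc j)" using assms(1) Suc.prems by auto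
  show ?case
  proof (cases "i = j")
    case True then show ?thesis using s by simp
  next
    case False then have "q i < q j" using Suc by auto
    then show ?thesis using s by simp
  qed
qed

lemma q_mono_le:
  assumes "\<forall>i<m. q i < q (Suc i)" "i \<le> j" "j \<le> m"
  shows "q i \<le> (q j :: real)"
  using q_mono[OF assms(1)] assms(2,3) by (cases "i = j") (auto intro: less_imp_le)

lemma q_union:
  assumes "\<forall>i<m. q i < q (Suc i)"
  shows "{q 0..<q m} = (\<Union>i<m. {q i..<(q (Suc i) :: real)})"
  using assms
proof (induction m)
  case 0 then show ?case by simp
next
  case (Suc m)
  have IH: "{q 0..<q m} = (\<Union>i<m. {q i..<q (Suc i)})" using Suc by auto
  have "q 0 \<le> q m" using q_mono_le[OF Suc.prems, of 0 m] by simp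
  moreover have "q m < q (Suc m)" using Suc.prems by auto
  ultimately have "{q 0..<q (Suc m)} = {q 0..<q m} \<union> {q m..<q (Suc m)}" by auto
  then show ?case using IH by (simp add: lessThan_Suc Un_commute)
qed

lemma q_disj:
  assumes "\<forall>i<m. q i < q (Suc i)" "i < m" "j < m" "i \<noteq> j"
  shows "{q i..<q (Suc i)} \<inter> {q j..<(q (Suc j) :: real)} = {}"
proof -
  { fix i j assume "i < j" "j < m"
    then have "q (Suc i) \<le> q j" using q_mono_le[OF assms(1), of "Suc i" j] by auto
    then have "{q i..<q (Suc i)} \<inter> {q j..<(q (Suc j) :: real)} = {}" by auto }
  note * = this
  show ?thesis
  proof (cases "i < j")
    case True then show ?thesis using * assms(3) by blast
  next
    case False then have "j < i" using assms(4) by simp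
    then show ?thesis using *[of j i] assms(2) by blast
  qed
qed

lemma det:
  assumes w: "set w \<subseteq> {..n}" and m: "m = length w"
    and q: "\<forall>i<m. q i < q (Suc i)" "q 0 = t0" "q m = t"
    and fin: "\<forall>i<m. \<forall>k\<le>n. finite (\<omega> k \<inter> {q i..<q (Suc i)})
                 \<and> card (\<omega> k \<inter> {q i..<q (Suc i)}) = (if k = w ! i then 1 else 0)"
  shows "tasep_phi n t t0 x \<omega> = fold (\<lambda>k y. tasep_jump n y k) w x"
proof -
  have wi: "w ! i \<le> n" if "i < m" for i using w m that nth_mem by fastforce
  have "\<forall>i<m. \<exists>s. \<omega> (w ! i) \<inter> {q i..<q (Suc i)} = {s}"
  proof (intro allI impI)
    fix i assume "i < m"
    then have "card (\<omega> (w ! i) \<inter> {q i..<q (Suc i)}) = Suc 0" using fin wi by auto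
    then show "\<exists>s. \<omega> (w ! i) \<inter> {q i..<q (Suc i)} = {s}" by (simp only: card_1_singleton_iff)
  qed
  then obtain p where p: "\<And>i. i < m \<Longrightarrow> \<omega> (w ! i) \<inter> {q i..<q (Suc i)} = {p i}"
    by metis
  have emp: "\<omega> k \<inter> {q i..<q (Suc i)} = {}" if "i < m" "k \<le> n" "k \<noteq> w ! i" for i k
  proof -
    have "finite (\<omega> k \<inter> {q i..<q (Suc i)})" "card (\<omega> k \<inter> {q i..<q (Suc i)}) = 0"
      using fin that by auto
    then show ?thesis by simp
  qed
  have pI: "p i \<in> {q i..<q (Suc i)}" "p i \<in> \<omega> (w ! i)" if "i < m" for i
    using p[OF that] by auto
  have jt: "jump_times n \<omega> t0 t = p ` {..<m}"
  proof
    show "jump_times n \<omega> t0 t \<subseteq> p ` {..<m}"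
    proof
      fix s assume "s \<in> jump_times n \<omega> t0 t"
      then obtain k where k: "k \<le> n" "s \<in> \<omega> k" "s \<in> {q 0..<q m}"
        unfolding jump_times_def using q by auto
      then obtain i where i: "i < m" "s \<in> {q i..<q (Suc i)}" using q_union[OF q(1)] by auto
      have "k = w ! i" using emp[OF i(1) k(1)] k i by blast
      then show "s \<in> p ` {..<m}" using p[OF i(1)] k i by auto
    qed
  next
    show "p ` {..<m} \<subseteq> jump_times n \<omega> t0 t"
    proof
      fix s assume "s \<in> p ` {..<m}"
      then obtain i where i: "i < m" "s = p i" by auto
      have "{q i..<q (Suc i)} \<subseteq> {q 0..<q m}" using q_union[OF q(1)] i by auto
      then show "s \<in> jump_times n \<omega> t0 t"
        unfolding jump_times_def using pI[OF i(1)] wi[OF i(1)] i q by auto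
    qed
  qed
  have pmono: "p i < p j" if "i < j" "j < m" for i j
  proof -
    have "p i < q (Suc i)" using pI(1)[of i] that by auto
    also have "q (Suc i) \<le> q j" using q_mono_le[OF q(1), of "Suc i" j] that by auto
    also have "q j \<le> p j" using pI(1)[of j] that by auto
    finally show ?thesis .
  qed
  have sw: "sorted_wrt (<) (map p [0..<m])"
    unfolding sorted_wrt_iff_nth_less using pmono by auto
  have sl: "sorted_list_of_set (jump_times n \<omega> t0 t) = map p [0..<m]"
  proof -
    have "p ` {..<m} = set (map p [0..<m])" by auto
    moreover have "sorted (map p [0..<m])" "distinct (map p [0..<m])" using sw strict_sorted_iff by auto
    ultimately show ?thesis unfolding jt
      by (simp only: sorted_list_of_set_sort_remdups) (simp add: distinct_remdups_id sorted_sort_id)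
  qed
  have js: "jump_site n \<omega> (p i) = w ! i" if "i < m" for i
    unfolding jump_site_def
  proof (rule the_equality)
    show "w ! i \<le> n \<and> p i \<in> \<omega> (w ! i)" using wi pI that by auto
  next
    fix k assume "k \<le> n \<and> p i \<in> \<omega> k"
    then show "k = w ! i" using emp[OF that, of k] pI(1)[OF that] by blast
  qed
  have "tasep_phi n t t0 x \<omega> = fold (\<lambda>s y. tasep_jump n y (jump_site n \<omega> s)) (map p [0..<m]) x"
    unfolding tasep_phi_def sl ..
  also have "\<dots> = fold ((\<lambda>s y. tasep_jump n y (jump_site n \<omega> s)) \<circ> p) [0..<m] x"
    by (simp add: fold_map)
  also have "\<dots> = fold ((\<lambda>k y. tasep_jump n y k) \<circ> (\<lambda>i. w ! i)) [0..<m] x"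
    by (rule fold_cong) (auto simp: js)
  also have "\<dots> = fold (\<lambda>k y. tasep_jump n y k) (map (\<lambda>i. w ! i) [0..<m]) x"
    by (simp add: fold_map)
  also have "\<dots> = fold (\<lambda>k y. tasep_jump n y k) w x"
    using m map_nth[of w] by simp
  finally show ?thesis .
qed


lemma poisson_bound:
  fixes L r R :: real and b :: bool
  assumes "0 < r" "r \<le> L" "L \<le> R"
  shows "min r 1 * exp (- R) \<le> L ^ (if b then 1 else 0) / fact (if b then 1 else 0) * exp (- L)"
proof -
  have e: "exp (- R) \<le> exp (- L)" using assms by simp
  show ?thesis
  proof (cases b)
    case True
    have "min r 1 * exp (- R) \<le> r * exp (- R)" by (simp add: mult_right_mono)
    also have "\<dots> \<le> L * exp (- L)" using assms e by (intro mult_mono) auto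
    finally show ?thesis using True by simp
  next
    case False
    have "min r 1 * exp (- R) \<le> 1 * exp (- R)" by (intro mult_right_mono) auto
    then have "min r 1 * exp (- R) \<le> exp (- L)" using e by linarith
    then show ?thesis using False by simp
  qed
qed

theorem lemma12:
  fixes n :: nat and r R :: real
  assumes "0 < r" and "r < R"
  shows "\<exists>\<delta>>0. \<forall>(lam :: nat \<Rightarrow> real \<Rightarrow> real) (M :: config measure) (t0::real) (t::real).
           admissible_rates n lam \<longrightarrow> poisson_processes n lam M \<longrightarrow>
           joint_bounded_rates n lam r R (n * (n + 1) div 2) t0 t \<longrightarrow>
           (\<exists>E\<in>sets M. E \<subseteq> synchronised n t t0 \<and> measure M E \<ge> \<delta>)"
proof -
  define m where "m = n * (n + 1) div 2"
  define c0 where "c0 = min r 1 * exp (- R)"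
  have c0: "0 < c0" "c0 \<le> 1" using assms unfolding c0_def
    by (auto simp: min_def intro: mult_le_one)
  show ?thesis
  proof (intro exI[of _ "c0 ^ (m * (n + 1))"] conjI allI impI)
    show "0 < c0 ^ (m * (n + 1))" using c0 by simp
  next
    fix lam :: "nat \<Rightarrow> real \<Rightarrow> real" and M :: "config measure" and t0 t :: real
    assume adm: "admissible_rates n lam" and pp: "poisson_processes n lam M"
      and jb: "joint_bounded_rates n lam r R (n * (n + 1) div 2) t0 t"
    interpret prob_space M using pp unfolding poisson_processes_def by auto
    show "\<exists>E\<in>sets M. E \<subseteq> synchronised n t t0 \<and> c0 ^ (m * (n + 1)) \<le> measure M E"
    proof (cases "n = 0")
      case True
      have "space M \<subseteq> synchronised n t t0"
        using True unfolding synchronised_def tasep_states_def by auto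
      then show ?thesis using True m_def prob_space by (intro bexI[of _ "space M"]) auto
    next
      case False
      from jb obtain q where q0: "q 0 = t0" and qm: "q m = t"
        and qs: "\<forall>i<m. q i < q (Suc i)"
        and qb: "\<forall>i<m. \<forall>k\<le>n. r \<le> integral {q i..q (Suc i)} (lam k) \<and>
                         integral {q i..q (Suc i)} (lam k) \<le> R"
        unfolding joint_bounded_rates_def m_def by blast
      define w where "w = sweep n"
      have lw: "length w = m" unfolding w_def m_def by (simp add: length_sweep)
      have sw: "set w \<subseteq> {..n}" unfolding w_def using set_sweep[of n] by auto
      define S where "S = {..<m} \<times> {..n}"
      define g where "g = (\<lambda>(i::nat, k::nat). (k, q i, q (Suc i)))"
      define X where "X = (\<lambda>(k::nat,a::real,b::real) (\<omega>::config). card (\<omega> k \<inter> {a..<b}))"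
      define cnt where "cnt = (\<lambda>(i::nat, k::nat). if k = w ! i then 1 else (0::nat))"
      define B where "B = (\<lambda>(i::nat, k::nat). {\<omega>\<in>space M. card (\<omega> k \<inter> {q i..<q (Suc i)}) = cnt (i, k)})"
      have finS: "finite S" unfolding S_def by auto
      have m1: "m \<ge> 1" using False unfolding m_def by (cases n) auto
      have S0: "(0, 0) \<in> S" unfolding S_def using m1 by auto
      then have Sne: "S \<noteq> {}" by auto
      have cardS: "card S = m * (n + 1)" unfolding S_def by (simp add: card_cartesian_product)
      have qinj: "q i = q j \<Longrightarrow> i \<le> m \<Longrightarrow> j \<le> m \<Longrightarrow> i = j" for i j
        using q_mono[OF qs, of i j] q_mono[OF qs, of j i] by (metis less_irrefl linorder_neqE_nat)
      have injg: "inj_on g S"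
        unfolding inj_on_def S_def g_def using qinj by auto
      have XB: "B x = X (g x) -` {cnt x} \<inter> space M" for x
        unfolding B_def X_def g_def by (cases x) auto
      have Bsets: "B x \<in> sets M" if "x \<in> S" for x
      proof -
        obtain i k where x: "x = (i, k)" by (cases x)
        have "i < m" "k \<le> n" using that x S_def by auto
        then have "q i \<le> q (Suc i)" using qs by (auto intro: less_imp_le)
        then have "(\<lambda>\<omega>. card (\<omega> k \<inter> {q i..<q (Suc i)})) \<in> measurable M (count_space UNIV)"
          using pp \<open>k \<le> n\<close> unfolding poisson_processes_def by blast
        from measurable_sets[OF this, of "{cnt x}"]
        show ?thesis using XB[of x] unfolding X_def g_def x by simp
      qed
      have Bprob: "c0 \<le> prob (B x)" if "x \<in> S" for x
      proof -
        obtain i k where x: "x = (i, k)" by (cases x)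
        have ik: "i < m" "k \<le> n" using that x S_def by auto
        then have "q i \<le> q (Suc i)" using qs by (auto intro: less_imp_le)
        then have "prob (B x) = (integral {q i..q (Suc i)} (lam k)) ^ cnt x / fact (cnt x)
                       * exp (- integral {q i..q (Suc i)} (lam k))"
          using pp ik unfolding poisson_processes_def B_def x by auto
        also have "\<dots> \<ge> c0" unfolding c0_def cnt_def x
          using poisson_bound[of r "integral {q i..q (Suc i)} (lam k)" R "k = w ! i"] qb ik assms
          by (simp add: if_distrib cong: if_cong)
        finally show ?thesis .
      qed
      have indep: "indep_vars (\<lambda>_. count_space UNIV) X (g ` S)"
      proof -
        have "finite (g ` S)" using finS by auto
        moreover have "\<forall>(k,a,b)\<in>g ` S. k \<le> n \<and> a \<le> b"
          unfolding g_def S_def using qs by (auto intro: less_imp_le)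
        moreover have "\<forall>(k,a,b)\<in>g ` S. \<forall>(k',a',b')\<in>g ` S. (k,a,b) \<noteq> (k',a',b') \<longrightarrow> k = k' \<longrightarrow>
              {a..<b} \<inter> {a'..<b'} = {}"
          unfolding g_def S_def using q_disj[OF qs] by fastforce
        ultimately show ?thesis using pp unfolding poisson_processes_def X_def by blast
      qed
      have "prob (\<Inter>y\<in>g ` S. B (inv_into S g y)) = (\<Prod>y\<in>g ` S. prob (B (inv_into S g y)))"
      proof (rule indep_setsD)
        show "indep_sets (\<lambda>y. {X y -` A \<inter> space M | A. A \<in> sets (count_space UNIV)}) (g ` S)"
          using indep unfolding indep_vars_def2 by blast
        show "\<forall>j\<in>g ` S. B (inv_into S g j) \<in> {X j -` A \<inter> space M | A. A \<in> sets (count_space UNIV)}"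
          using XB injg by auto
      qed (use finS Sne in auto)
      moreover have "(\<Inter>y\<in>g ` S. B (inv_into S g y)) = (\<Inter>x\<in>S. B x)"
        using injg by auto
      moreover have "(\<Prod>y\<in>g ` S. prob (B (inv_into S g y))) = (\<Prod>x\<in>S. prob (B x))"
        using injg by (simp add: prod.reindex)
      ultimately have pint: "prob (\<Inter>x\<in>S. B x) = (\<Prod>x\<in>S. prob (B x))" by simp
      have "c0 ^ (m * (n + 1)) = (\<Prod>x\<in>S. c0)" using cardS by simp
      also have "\<dots> \<le> (\<Prod>x\<in>S. prob (B x))"
        by (rule prod_mono) (use c0 Bprob in auto)
      finally have pbound: "c0 ^ (m * (n + 1)) \<le> prob (\<Inter>x\<in>S. B x)" using pint by simp
      have "AE \<omega> in M. \<forall>x\<in>S. finite (\<omega> (snd x) \<inter> {q (fst x)..<q (Suc (fst x))})"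
        using pp finS unfolding poisson_processes_def S_def by (intro AE_finite_allI) auto
      then obtain N where N: "{\<omega>\<in>space M. \<not> (\<forall>x\<in>S. finite (\<omega> (snd x) \<inter> {q (fst x)..<q (Suc (fst x))}))} \<subseteq> N"
        "N \<in> null_sets M" by (elim AE_E) auto
      define E where "E = (\<Inter>x\<in>S. B x) - N"
      have Isets: "(\<Inter>x\<in>S. B x) \<in> sets M" using finS Sne Bsets by auto
      have Esets: "E \<in> sets M" unfolding E_def using Isets N(2) by auto
      have "measure M E = prob (\<Inter>x\<in>S. B x)" unfolding E_def using Isets N(2)
        by (simp add: measure_Diff_null_set)
      moreover have "E \<subseteq> synchronised n t t0"
      proof
        fix \<omega> assume "\<omega> \<in> E"
        then have om: "\<omega> \<in> space M" "\<omega> \<notin> N" "\<And>x. x \<in> S \<Longrightarrow> \<omega> \<in> B x"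
          unfolding E_def using S0 by (auto simp: B_def)
        have fin: "\<forall>i<m. \<forall>k\<le>n. finite (\<omega> k \<inter> {q i..<q (Suc i)})
                 \<and> card (\<omega> k \<inter> {q i..<q (Suc i)}) = (if k = w ! i then 1 else 0)"
        proof (intro allI impI conjI)
          fix i k assume ik: "i < m" "k \<le> n"
          then have "(i, k) \<in> S" unfolding S_def by auto
          show "finite (\<omega> k \<inter> {q i..<q (Suc i)})"
          proof (rule ccontr)
            assume "infinite (\<omega> k \<inter> {q i..<q (Suc i)})"
            then have "\<omega> \<in> {\<omega>\<in>space M. \<not> (\<forall>x\<in>S. finite (\<omega> (snd x) \<inter> {q (fst x)..<q (Suc (fst x))}))}"
              using om(1) \<open>(i, k) \<in> S\<close> by force
            then show False using N(1) om(2) by blast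
          qed
          show "card (\<omega> k \<inter> {q i..<q (Suc i)}) = (if k = w ! i then 1 else 0)"
            using om(3)[OF \<open>(i, k) \<in> S\<close>] unfolding B_def cnt_def by auto
        qed
        have "tasep_phi n t t0 x \<omega> = replicate n True" if "x \<in> tasep_states n" for x
        proof -
          have "tasep_phi n t t0 x \<omega> = fold (\<lambda>k y. tasep_jump n y k) w x"
            using det[OF sw lw[symmetric] qs q0 qm fin] .
          also have "\<dots> = replicate n True" unfolding w_def
            using sweep_fill[of n n x] that unfolding tasep_states_def by force
          finally show ?thesis .
        qed
        then show "\<omega> \<in> synchronised n t t0" unfolding synchronised_def by auto
      qed
      ultimately show ?thesis using Esets pbound by auto
    qed
  qed
qed

end
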